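(* Let $B$ and $k$ be positive integers and let $G=(V,E)$ be a graph with $m=|E|$ edges and maximum degree at most $B$. If $G$ has a vertex cover with at most $m/B+k$ vertices, then there exists a set $D\subseteq E$ with $|D|\le kB$ such that the graph $G-D=(V,E\setminus D)$ is bipartite.
   Context: A vertex cover of a graph $G=(V,E)$ is a set $C\subseteq V$ such that every edge of $G$ has at least one endpoint in $C$. *)

theory Defs
  imports Complex_Main
begin

definition simple_graph :: "'a set \<Rightarrow> 'a set set \<Rightarrow> bool" where
  "simple_graph V E \<longleftrightarrow> finite V \<and> (\<forall>e\<in>E. e \<subseteq> V \<and> card e = 2)"

definition degree :: "'a set set \<Rightarrow> 'a \<Rightarrow> nat" where
  "degree E v = card {e\<in>E. v \<in> e}"

definition max_degree_le :: "'a set \<Rightarrow> 'a set set \<Rightarrow> nat \<Rightarrow> bool" where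
  "max_degree_le V E B \<longleftrightarrow> (\<forall>v\<in>V. degree E v \<le> B)"

definition vertex_cover :: "'a set \<Rightarrow> 'a set set \<Rightarrow> 'a set \<Rightarrow> bool" where
  "vertex_cover V E C \<longleftrightarrow> C \<subseteq> V \<and> (\<forall>e\<in>E. e \<inter> C \<noteq> {})"

definition bipartite :: "'a set \<Rightarrow> 'a set set \<Rightarrow> bool" where
  "bipartite V E \<longleftrightarrow> (\<exists>X\<subseteq>V. \<forall>e\<in>E. card (e \<inter> X) = 1 \<and> card (e - X) = 1)"

end

theory Submission
  imports Defs
begin

lemma card_filter_ind: "finite A \<Longrightarrow> card {x\<in>A. P x} = (\<Sum>x\<in>A. if P x then 1 else 0 :: nat)"
  by (simp add: sum.If_cases Collect_conj_eq Int_commute)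

theorem lemma2:
  fixes V :: "'a set" and E :: "'a set set" and B k :: nat
  assumes "B > 0" and "k > 0"
    and "simple_graph V E"
    and "max_degree_le V E B"
    and "\<exists>C. vertex_cover V E C \<and> real (card C) \<le> real (card E) / real B + real k"
  shows "\<exists>D\<subseteq>E. card D \<le> k * B \<and> bipartite V (E - D)"
proof -
  obtain C where vc: "vertex_cover V E C" and cC: "real (card C) \<le> real (card E) / real B + real k"
    using assms(5) by blast
  have CV: "C \<subseteq> V" and cov: "\<forall>e\<in>E. e \<inter> C \<noteq> {}" using vc by (auto simp: vertex_cover_def)
  have fV: "finite V" and eV: "\<forall>e\<in>E. e \<subseteq> V \<and> card e = 2" using assms(3) by (auto simp: simple_graph_def)
  have fE: "finite E" using fV eV by (meson PowI finite_Pow_iff finite_subset subsetI)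
  have fC: "finite C" using fV CV finite_subset by blast
  define D where "D = {e\<in>E. e \<subseteq> C}"
  have DE: "D \<subseteq> E" by (auto simp: D_def)
  have fe: "\<And>e. e \<in> E \<Longrightarrow> finite e" using eV by (metis card.infinite zero_neq_numeral)
  have dc: "(\<Sum>v\<in>C. degree E v) = (\<Sum>e\<in>E. card (e \<inter> C))"
  proof -
    have "(\<Sum>v\<in>C. degree E v) = (\<Sum>v\<in>C. \<Sum>e\<in>E. if v \<in> e then 1 else 0 :: nat)"
      unfolding degree_def using fE by (simp add: card_filter_ind)
    also have "\<dots> = (\<Sum>e\<in>E. \<Sum>v\<in>C. if v \<in> e then 1 else 0 :: nat)" by (rule sum.swap)
    also have "\<dots> = (\<Sum>e\<in>E. card {v\<in>C. v \<in> e})" using fC by (simp add: card_filter_ind)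
    also have "\<dots> = (\<Sum>e\<in>E. card (e \<inter> C))"
      by (intro sum.cong refl arg_cong[where f=card]) auto
    finally show ?thesis .
  qed
  have each: "\<And>e. e \<in> E \<Longrightarrow> card (e \<inter> C) = 1 + (if e \<in> D then 1 else 0)"
  proof -
    fix e assume e: "e \<in> E"
    have fin: "finite e" using fe e .
    have c2: "card e = 2" using eV e by auto
    have ne: "card (e \<inter> C) \<noteq> 0" using cov e fin by auto
    have le: "card (e \<inter> C) \<le> 2" using card_mono[OF fin, of "e \<inter> C"] c2 by auto
    show "card (e \<inter> C) = 1 + (if e \<in> D then 1 else 0)"
    proof (cases "e \<subseteq> C")
      case True
      then have "e \<inter> C = e" by auto
      then show ?thesis using c2 True e by (simp add: D_def)
    next
      case False
      then have "e \<inter> C \<subset> e" by auto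
      then have "card (e \<inter> C) < 2" using psubset_card_mono[OF fin] c2 by auto
      then show ?thesis using ne False by (auto simp: D_def)
    qed
  qed
  have "(\<Sum>e\<in>E. card (e \<inter> C)) = (\<Sum>e\<in>E. 1 + (if e \<in> D then 1 else 0 :: nat))"
    using each by (intro sum.cong) auto
  also have "\<dots> = card E + card D"
  proof -
    have "(\<Sum>e\<in>E. 1 + (if e \<in> D then 1 else 0 :: nat)) = card E + (\<Sum>e\<in>E. if e \<in> D then 1 else 0 :: nat)"
      by (simp only: sum.distrib) simp
    also have "(\<Sum>e\<in>E. if e \<in> D then 1 else 0 :: nat) = card (E \<inter> D)"
      using fE by (simp add: sum.If_cases)
    also have "E \<inter> D = D" using DE by auto
    finally show ?thesis by simp
  qed
  finally have eq: "(\<Sum>v\<in>C. degree E v) = card E + card D" using dc by simp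
  have "(\<Sum>v\<in>C. degree E v) \<le> (\<Sum>v\<in>C. B)"
    using assms(4) CV by (intro sum_mono) (auto simp: max_degree_le_def)
  then have "card E + card D \<le> card C * B" using eq by simp
  then have r1: "real (card E) + real (card D) \<le> real (card C) * real B"
    by (metis of_nat_add of_nat_le_iff of_nat_mult)
  have "real (card C) * real B \<le> (real (card E) / real B + real k) * real B"
    using cC assms(1) by (intro mult_right_mono) auto
  also have "\<dots> = real (card E) + real k * real B" using assms(1) by (simp add: field_simps)
  finally have "real (card D) \<le> real k * real B" using r1 by linarith
  then have cD: "card D \<le> k * B" by (metis of_nat_le_iff of_nat_mult)
  have bip: "bipartite V (E - D)"
    unfolding bipartite_def
  proof (intro exI[of _ C] conjI CV ballI)
    fix e assume e: "e \<in> E - D"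
    then have eE: "e \<in> E" by auto
    show c1: "card (e \<inter> C) = 1" using each[OF eE] e by auto
    have fin: "finite e" using fe eE .
    have "card e = card (e \<inter> C) + card (e - C)"
      using fin by (metis Diff_disjoint Int_Diff_Un Int_commute card_Un_disjoint finite_Diff finite_Int Int_Diff_disjoint)
    then show "card (e - C) = 1" using c1 eV eE by auto
  qed
  show ?thesis using DE cD bip by blast
qed

end
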